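(* Let $c,k_1,k_2,k_3,k_4$ be real constants with $k_1\neq0$, and let $F$ be a smooth function of $x$ on an interval satisfying identically $$\Big(F(x)+\frac{k_3}{2}\Big)\Big(F(x)+\frac{c}{k_1}x+\frac{k_2}{k_1}-k_3\Big)^2=k_4.$$ Then for $V(x,y)=cy+F(x)$ the function $$J=k_1\dot x^3+\dot x^2\dot y+\big(3k_1F(x)+cx+k_2\big)\dot x+\big(2F(x)+k_3\big)\dot y$$ is a first integral of $\ddot x=-V_{,x}$, $\ddot y=-V_{,y}$.
   Context: A first integral is a function of $(t,x,y,\dot x,\dot y)$ whose total time derivative vanishes along every solution of the given equations of motion. *)

theory Defs
  imports "HOL-Analysis.Analysis"
begin

definition pot :: "real \<Rightarrow> (real \<Rightarrow> real) \<Rightarrow> real \<Rightarrow> real \<Rightarrow> real" where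
  "pot c F x y = c * y + F x"

definition Jfun :: "real \<Rightarrow> real \<Rightarrow> real \<Rightarrow> real \<Rightarrow> (real \<Rightarrow> real)
                    \<Rightarrow> real \<Rightarrow> real \<Rightarrow> real \<Rightarrow> real \<Rightarrow> real" where
  "Jfun c k1 k2 k3 F x y xd yd =
     k1 * xd ^ 3 + xd ^ 2 * yd + (3 * k1 * F x + c * x + k2) * xd + (2 * F x + k3) * yd"

end

theory Submission
  imports Defs
begin

theorem mainTheorem12:
  fixes c k1 k2 k3 k4 :: real and F :: "real \<Rightarrow> real" and I T :: "real set"
    and x y xd yd :: "real \<Rightarrow> real"
  assumes k1: "k1 \<noteq> 0"
    and I: "is_interval I" "open I"
    and Fsmooth: "\<forall>n. \<forall>u\<in>I. (deriv ^^ n) F differentiable (at u)"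
    and ident: "\<forall>u\<in>I. (F u + k3 / 2) * (F u + c / k1 * u + k2 / k1 - k3) ^ 2 = k4"
    and T: "is_interval T" "open T"
    and xT: "\<forall>t\<in>T. x t \<in> I"
    and dx: "\<forall>t\<in>T. (x has_real_derivative xd t) (at t)"
    and dy: "\<forall>t\<in>T. (y has_real_derivative yd t) (at t)"
    and ddx: "\<forall>t\<in>T. (xd has_real_derivative - deriv (\<lambda>u. pot c F u (y t)) (x t)) (at t)"
    and ddy: "\<forall>t\<in>T. (yd has_real_derivative - deriv (\<lambda>v. pot c F (x t) v) (y t)) (at t)"
  shows "\<forall>t\<in>T. ((\<lambda>s. Jfun c k1 k2 k3 F (x s) (y s) (xd s) (yd s)) has_real_derivative 0) (at t)"
proof -
  define G where "G = (\<lambda>u. F u + c / k1 * u + k2 / k1 - k3)"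
  have dF: "(F has_real_derivative deriv F u) (at u)" if "u \<in> I" for u
    using Fsmooth that DERIV_deriv_iff_real_differentiable by (metis funpow_0)
  have contF: "continuous_on I F"
    using dF by (meson DERIV_isCont continuous_at_imp_continuous_on)
  have dG: "(G has_real_derivative deriv F u + c / k1) (at u)" if "u \<in> I" for u
    unfolding G_def using dF[OF that] k1 by (auto intro!: derivative_eq_intros)
  have key0: "G u * (deriv F u * G u + (2 * F u + k3) * (deriv F u + c / k1)) = 0"
    if u: "u \<in> I" for u
  proof -
    have h: "((\<lambda>v. (F v + k3 / 2) * (G v)^2) has_real_derivative
        deriv F u * (G u)^2 + (F u + k3/2) * (2 * G u * (deriv F u + c / k1))) (at u)"
      using dF[OF u] dG[OF u] by (auto intro!: derivative_eq_intros simp: power2_eq_square)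
    have h2: "((\<lambda>v. (F v + k3 / 2) * (G v)^2) has_real_derivative 0) (at u)"
      apply (rule has_field_derivative_transform_within_open[where f="\<lambda>_. k4" and S=I])
      using u I ident by (auto simp: G_def)
    have "deriv F u * (G u)^2 + (F u + k3/2) * (2 * G u * (deriv F u + c / k1)) = 0"
      using DERIV_unique[OF h h2] .
    then show ?thesis by (simp add: algebra_simps power2_eq_square add_divide_distrib)
  qed
  have key1: "(2 * F u + k3) * (deriv F u + c / k1) = 0" if u: "u \<in> I" "G u = 0" for u
  proof (cases "F u = - k3 / 2")
    case True then show ?thesis by simp
  next
    case False
    define S where "S = F -` (UNIV - {- k3 / 2}) \<inter> I"
    have oS: "open S" unfolding S_def using contF I(2) continuous_on_open_vimage by blast
    have uS: "u \<in> S" using False u unfolding S_def by auto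
    have G0: "G v = 0" if "v \<in> S" for v
    proof -
      have "k4 = 0" using ident u by (auto simp: G_def)
      then have "(F v + k3 / 2) * (G v)^2 = 0" using ident that by (auto simp: S_def G_def)
      moreover have "F v + k3 / 2 \<noteq> 0" using that by (auto simp: S_def)
      ultimately show ?thesis by simp
    qed
    have "((\<lambda>_. 0::real) has_real_derivative deriv F u + c / k1) (at u)"
      apply (rule has_field_derivative_transform_within_open[OF dG[OF u(1)] oS uS])
      using G0 by simp
    then have "deriv F u + c / k1 = 0" using DERIV_unique DERIV_const by blast
    then show ?thesis by simp
  qed
  have key: "(3 * k1 * F u + c * u + k2) * deriv F u + c * (2 * F u + k3) = 0"
    if u: "u \<in> I" for u
  proof -
    have e: "deriv F u * G u + (2 * F u + k3) * (deriv F u + c / k1) = 0"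
    proof (cases "G u = 0")
      case True then show ?thesis using key1[OF u] by simp
    next
      case False then show ?thesis using key0[OF u] by simp
    qed
    have "k1 * (deriv F u * G u + (2 * F u + k3) * (deriv F u + c / k1))
       = (3 * k1 * F u + c * u + k2) * deriv F u + c * (2 * F u + k3)"
      using k1 by (simp add: G_def field_simps)
    then show ?thesis using e by simp
  qed
  show ?thesis
  proof
    fix t assume t: "t \<in> T"
    have xI: "x t \<in> I" using xT t by auto
    have dFx: "((\<lambda>s. F (x s)) has_real_derivative deriv F (x t) * xd t) (at t)"
      using DERIV_chain2[OF dF[OF xI] dx[rule_format, OF t]] .
    have p1: "deriv (\<lambda>u. pot c F u (y t)) (x t) = deriv F (x t)"
      apply (rule DERIV_imp_deriv) unfolding pot_def
      using dF[OF xI] by (auto intro!: derivative_eq_intros)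
    have p2: "deriv (\<lambda>v. pot c F (x t) v) (y t) = c"
      apply (rule DERIV_imp_deriv) unfolding pot_def
      by (auto intro!: derivative_eq_intros)
    have ddx': "(xd has_real_derivative - deriv F (x t)) (at t)" using ddx t p1 by auto
    have ddy': "(yd has_real_derivative - c) (at t)" using ddy t p2 by auto
    have "((\<lambda>s. Jfun c k1 k2 k3 F (x s) (y s) (xd s) (yd s)) has_real_derivative
      - ((3 * k1 * F (x t) + c * x t + k2) * deriv F (x t) + c * (2 * F (x t) + k3))) (at t)"
      unfolding Jfun_def
      apply (rule derivative_eq_intros dFx ddx' ddy' dx[rule_format, OF t] dy[rule_format, OF t] | simp)+
      by (simp add: algebra_simps power2_eq_square power3_eq_cube)
    then show "((\<lambda>s. Jfun c k1 k2 k3 F (x s) (y s) (xd s) (yd s)) has_real_derivative 0) (at t)"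
      using key[OF xI] by simp
  qed
qed

end
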